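(* Let $P,Q\in\Gamma_n$ with $P\ne Q$, and $0<r\le R$ with $r\le p_i/q_i\le R$ for all $i$. Then $$r\le\frac{\sqrt{2K(P\|Q)}}{\sqrt{\chi^2(Q\|P)}}\le R.$$
   Context: $\Gamma_n=\{P=(p_1,\dots,p_n): p_i>0,\ \sum_i p_i=1\}$, $n\ge2$. $K(P\|Q)=\sum_i p_i\ln(p_i/q_i)$ and $\chi^2(Q\|P)=\sum_i\frac{(p_i-q_i)^2}{p_i}$. *)

theory Defs
  imports Complex_Main
begin

definition Gamma :: "nat \<Rightarrow> (nat \<Rightarrow> real) set" where
  "Gamma n = {P. (\<forall>i<n. P i > 0) \<and> (\<Sum>i<n. P i) = 1}"

definition KL :: "nat \<Rightarrow> (nat \<Rightarrow> real) \<Rightarrow> (nat \<Rightarrow> real) \<Rightarrow> real" where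
  "KL n P Q = (\<Sum>i<n. P i * ln (P i / Q i))"

definition chi2 :: "nat \<Rightarrow> (nat \<Rightarrow> real) \<Rightarrow> (nat \<Rightarrow> real) \<Rightarrow> real" where
  "chi2 n Q P = (\<Sum>i<n. (P i - Q i)^2 / P i)"

end

theory Submission
  imports Defs
begin

definition Gf :: "real \<Rightarrow> real" where
  "Gf t = 2*(t*ln t - t + 1) - (t-1)^2/t"
definition Hf :: "real \<Rightarrow> real" where
  "Hf t = 2*(t*ln t - t + 1) - (t-1)^2"

lemma Gf_der: "x > 0 \<Longrightarrow> (Gf has_real_derivative 2*ln x - 1 + 1/x^2) (at x)"
    unfolding Gf_def[abs_def]
    by (auto intro!: derivative_eq_intros simp: field_simps power2_eq_square)
lemma Hf_der: "x > 0 \<Longrightarrow> (Hf has_real_derivative 2*(ln x - x + 1)) (at x)"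
    unfolding Hf_def[abs_def]
    by (auto intro!: derivative_eq_intros simp: field_simps power2_eq_square)

lemma Gf_mono: assumes "0 < a" "a \<le> b" shows "Gf a \<le> Gf b"
proof -
  have d: "(Gf has_real_derivative 2*ln x - 1 + 1/x^2) (at x)" if "x \<in> {a..b}" for x
    using Gf_der that assms by auto
  have n: "2*ln x - 1 + 1/x^2 \<ge> 0" if "x \<in> {a..b}" for x
  proof -
    have xp: "x > 0" using that assms by auto
    have "ln (1/x^2) \<le> 1/x^2 - 1" using xp by (intro ln_le_minus_one) simp
    hence "ln (x^2) \<ge> 1 - 1/x^2" using xp by (simp add: ln_div)
    thus ?thesis using xp by (simp add: ln_realpow)
  qed
  show ?thesis by (rule deriv_nonneg_imp_mono[OF d n assms(2)])
qed

lemma Hf_anti: assumes "0 < a" "a \<le> b" shows "Hf b \<le> Hf a"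
proof -
  have d: "(Hf has_real_derivative 2*(ln x - x + 1)) (at x)" if "x \<in> {a..b}" for x
    using Hf_der that assms by auto
  have n: "2*(ln x - x + 1) \<le> 0" if "x \<in> {a..b}" for x
    using ln_le_minus_one[of x] that assms by auto
  show ?thesis by (rule deriv_nonpos_imp_antimono[OF d n assms(2)])
qed


lemma pointwise:
  fixes p q r R :: real
  assumes p: "p > 0" and q: "q > 0" and r: "0 < r" "r \<le> 1" and R: "1 \<le> R"
    and t: "r \<le> p/q" "p/q \<le> R"
  shows "r^2 * ((p-q)^2/p) \<le> 2*(p*ln(p/q) - p + q) \<and> 2*(p*ln(p/q) - p + q) \<le> R^2 * ((p-q)^2/p)"
proof -
  define t where "t = p/q"
  have tp: "t > 0" using p q by (simp add: t_def)
  have pe: "p = t*q" using q by (simp add: t_def)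
  define X where "X = 2*(p*ln(p/q) - p + q)"
  define D where "D = (p-q)^2/p"
  have D0: "D \<ge> 0" using p by (simp add: D_def)
  have qt: "q*t = p" using q by (simp add: t_def)
  have e1: "q*((t-1)^2/t) = (p-q)^2/p"
  proof -
    have "q*((t-1)^2/t) = (q*(t-1))^2/(q*t)" using q by (simp add: power2_eq_square)
    also have "q*(t-1) = p - q" using qt by (simp add: right_diff_distrib)
    finally show ?thesis using qt by simp
  qed
  have e2: "q*(t-1)^2 = t*((p-q)^2/p)"
  proof -
    have "t*((p-q)^2/p) = t*((q*(t-1))^2/(q*t))" using qt by (simp add: right_diff_distrib)
    also have "\<dots> = q*(t-1)^2" using q tp by (simp add: power2_eq_square)
    finally show ?thesis by simp
  qed
  have e0: "q*(2*(t*ln t - t + 1)) = X"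
  proof -
    have "q*(2*(t*ln t - t + 1)) = 2*((q*t)*ln t - q*t + q)" by (simp add: algebra_simps)
    also have "\<dots> = 2*(p*ln t - p + q)" using qt by simp
    also have "\<dots> = X" by (simp add: X_def t_def)
    finally show ?thesis .
  qed
  have G: "q * Gf t = X - D" unfolding Gf_def D_def using e0 e1 by (simp add: right_diff_distrib)
  have H: "q * Hf t = X - t*D" unfolding Hf_def D_def using e0 e2 by (simp add: right_diff_distrib)
  have G1: "Gf 1 = 0" "Hf 1 = 0" by (simp_all add: Gf_def Hf_def)
  have r2: "r^2 \<le> r" using r by (simp add: power2_eq_square mult_le_cancel_left1)
  have R2: "R \<le> R^2" using R by (simp add: power2_eq_square)
  show ?thesis
  proof (cases "t \<ge> 1")
    case True
    have "Gf t \<ge> 0" using Gf_mono[of 1 t] True G1 by simp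
    hence "q * Gf t \<ge> 0" using q by simp
    hence a: "X \<ge> D" using G by simp
    have "Hf t \<le> 0" using Hf_anti[of 1 t] True G1 by simp
    hence "q * Hf t \<le> 0" using q by (simp add: mult_nonneg_nonpos)
    hence b: "X \<le> t*D" using H by simp
    have "t*D \<le> R*D" using t D0 unfolding t_def[symmetric] by (intro mult_right_mono) auto
    also have "\<dots> \<le> R^2*D" using R2 D0 by (simp add: mult_right_mono)
    finally have "X \<le> R^2*D" using b by linarith
    moreover have "r^2 * D \<le> D" using r r2 D0 by (simp add: mult_left_le_one_le)
    ultimately show ?thesis using a unfolding X_def D_def by linarith
  next
    case False
    have "Gf t \<le> 0" using Gf_mono[of t 1] False G1 tp by simp
    hence "q * Gf t \<le> 0" using q by (simp add: mult_nonneg_nonpos)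
    hence a: "X \<le> D" using G by simp
    have "Hf t \<ge> 0" using Hf_anti[of t 1] False G1 tp by simp
    hence "q * Hf t \<ge> 0" using q by simp
    hence b: "X \<ge> t*D" using H by simp
    have "r^2*D \<le> r*D" using r2 D0 by (simp add: mult_right_mono)
    also have "\<dots> \<le> t*D" using t D0 unfolding t_def[symmetric] by (intro mult_right_mono) auto
    finally have "r^2*D \<le> X" using b by linarith
    moreover have "1 * D \<le> R^2 * D" using R R2 D0 by (intro mult_right_mono) auto
    ultimately show ?thesis using a unfolding X_def D_def by linarith
  qed
qed

theorem mainTheorem16:
  fixes n :: nat and P Q :: "nat \<Rightarrow> real" and r R :: real
  assumes "n \<ge> 2"
    and "P \<in> Gamma n" and "Q \<in> Gamma n"
    and "\<exists>i<n. P i \<noteq> Q i"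
    and "0 < r" and "r \<le> R"
    and "\<And>i. i < n \<Longrightarrow> r \<le> P i / Q i \<and> P i / Q i \<le> R"
  shows "r \<le> sqrt (2 * KL n P Q) / sqrt (chi2 n Q P)
       \<and> sqrt (2 * KL n P Q) / sqrt (chi2 n Q P) \<le> R"
proof -
  have Pp: "\<And>i. i < n \<Longrightarrow> P i > 0" and Ps: "(\<Sum>i<n. P i) = 1"
    using assms(2) by (auto simp: Gamma_def)
  have Qp: "\<And>i. i < n \<Longrightarrow> Q i > 0" and Qs: "(\<Sum>i<n. Q i) = 1"
    using assms(3) by (auto simp: Gamma_def)
  have n0: "{..<n} \<noteq> {}" using assms(1) by (simp add: lessThan_empty_iff)
  have r1: "r \<le> 1"
  proof (rule ccontr)
    assume "\<not> r \<le> 1"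
    have "Q i < P i" if i: "i < n" for i
    proof -
      have "1 < P i / Q i" using assms(7)[OF i] \<open>\<not> r \<le> 1\<close> by linarith
      thus ?thesis using Qp[OF i] by (simp add: pos_less_divide_eq)
    qed
    hence "(\<Sum>i<n. Q i) < (\<Sum>i<n. P i)" using n0 by (intro sum_strict_mono) auto
    thus False using Ps Qs by simp
  qed
  have R1: "1 \<le> R"
  proof (rule ccontr)
    assume "\<not> 1 \<le> R"
    have "P i < Q i" if i: "i < n" for i
    proof -
      have "P i / Q i < 1" using assms(7)[OF i] \<open>\<not> 1 \<le> R\<close> by linarith
      thus ?thesis using Qp[OF i] by (simp add: pos_divide_less_eq)
    qed
    hence "(\<Sum>i<n. P i) < (\<Sum>i<n. Q i)" using n0 by (intro sum_strict_mono) auto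
    thus False using Ps Qs by simp
  qed
  have pw: "\<And>i. i < n \<Longrightarrow> r^2 * ((P i - Q i)^2/P i) \<le> 2*(P i*ln(P i/Q i) - P i + Q i)
     \<and> 2*(P i*ln(P i/Q i) - P i + Q i) \<le> R^2 * ((P i - Q i)^2/P i)"
    using pointwise[OF Pp Qp assms(5) r1 R1] assms(7) by blast
  have K: "2 * KL n P Q = (\<Sum>i<n. 2*(P i*ln(P i/Q i) - P i + Q i))"
  proof -
    have "(\<Sum>i<n. 2*(P i*ln(P i/Q i) - P i + Q i)) = 2*((\<Sum>i<n. P i*ln(P i/Q i)) - (\<Sum>i<n. P i) + (\<Sum>i<n. Q i))"
      by (simp add: sum_distrib_left[symmetric] sum.distrib sum_subtractf)
    thus ?thesis using Ps Qs by (simp add: KL_def)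
  qed
  have C: "r^2 * chi2 n Q P = (\<Sum>i<n. r^2 * ((P i - Q i)^2/P i))" "R^2 * chi2 n Q P = (\<Sum>i<n. R^2 * ((P i - Q i)^2/P i))"
    by (simp_all add: chi2_def sum_distrib_left)
  have lo: "r^2 * chi2 n Q P \<le> 2 * KL n P Q" unfolding C K by (intro sum_mono) (use pw in blast)
  have hi: "2 * KL n P Q \<le> R^2 * chi2 n Q P" unfolding C K by (intro sum_mono) (use pw in blast)
  obtain j where j: "j < n" "P j \<noteq> Q j" using assms(4) by blast
  have cpos: "chi2 n Q P > 0" unfolding chi2_def
  proof (rule sum_pos2[of _ j])
    show "(P j - Q j)^2 / P j > 0" using j Pp[OF j(1)] by simp
  qed (use j Pp in \<open>auto intro: divide_nonneg_pos\<close>)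
  have sc: "sqrt (chi2 n Q P) > 0" using cpos by simp
  have "r * sqrt (chi2 n Q P) = sqrt (r^2 * chi2 n Q P)" using assms(5) by (simp add: real_sqrt_mult)
  also have "\<dots> \<le> sqrt (2 * KL n P Q)" using lo by simp
  finally have A: "r \<le> sqrt (2 * KL n P Q) / sqrt (chi2 n Q P)" using sc by (simp add: pos_le_divide_eq)
  have "sqrt (2 * KL n P Q) \<le> sqrt (R^2 * chi2 n Q P)" using hi by simp
  also have "\<dots> = R * sqrt (chi2 n Q P)" using assms(5,6) by (simp add: real_sqrt_mult)
  finally have B: "sqrt (2 * KL n P Q) / sqrt (chi2 n Q P) \<le> R" using sc by (simp add: pos_divide_le_eq)
  show ?thesis using A B by simp
qed

end
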